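(* Let $G$ be a connected graph, let $e=\{x,y\}$ and $f=\{u,v\}$ be edges of $G$, and consider the edges $e_{\bar{x}}=\{\bar{x},\overline{xy}\}$ and $f_{\bar{u}}=\{\bar{u},\overline{uv}\}$ of the full subdivision $S(G)$. If $e_{\bar{x}}\,\Theta^\ast_{S(G)}\,f_{\bar{u}}$, then $e\,\Theta^\ast_G\,f$.
   Context: For a connected graph $H$ with shortest-path distance $d_H$, two edges $\{x,y\}$ and $\{u,v\}$ of $H$ are in relation $\Theta_H$ if $d_H(x,u)+d_H(y,v)\neq d_H(x,v)+d_H(y,u)$; $\Theta^\ast_H$ denotes the transitive closure of $\Theta_H$ (an equivalence relation on $E(H)$). The full subdivision $S(G)$ is obtained by subdividing every edge of $G$ exactly once; the vertex of $S(G)$ corresponding to a vertex $x$ of $G$ is denoted $\bar{x}$, and the vertex subdividing the edge $\{x,y\}$ is denoted $\overline{xy}$. For $e=\{x,y\}\in E(G)$, $e_{\bar{x}}=\{\bar{x},\overline{xy}\}$ and $e_{\bar{y}}=\{\bar{y},\overline{xy}\}$. *)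

theory Defs
  imports Main
begin

definition graph :: "'a set \<Rightarrow> 'a set set \<Rightarrow> bool" where
  "graph V E \<longleftrightarrow> (\<forall>e\<in>E. \<exists>x y. x \<noteq> y \<and> x \<in> V \<and> y \<in> V \<and> e = {x, y})"

definition walk :: "'a set \<Rightarrow> 'a set set \<Rightarrow> 'a list \<Rightarrow> bool" where
  "walk V E xs \<longleftrightarrow> xs \<noteq> [] \<and> set xs \<subseteq> V \<and>
     (\<forall>i. Suc i < length xs \<longrightarrow> {xs ! i, xs ! Suc i} \<in> E)"

definition connected_graph :: "'a set \<Rightarrow> 'a set set \<Rightarrow> bool" where
  "connected_graph V E \<longleftrightarrow> V \<noteq> {} \<and>
     (\<forall>x\<in>V. \<forall>y\<in>V. \<exists>xs. walk V E xs \<and> hd xs = x \<and> last xs = y)"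

definition gdist :: "'a set \<Rightarrow> 'a set set \<Rightarrow> 'a \<Rightarrow> 'a \<Rightarrow> nat" where
  "gdist V E x y = (LEAST n. \<exists>xs. walk V E xs \<and> hd xs = x \<and> last xs = y \<and> length xs = Suc n)"

definition Theta :: "'a set \<Rightarrow> 'a set set \<Rightarrow> ('a set \<times> 'a set) set" where
  "Theta V E = {(e, f). e \<in> E \<and> f \<in> E \<and>
     (\<exists>x y u v. e = {x, y} \<and> f = {u, v} \<and>
        gdist V E x u + gdist V E y v \<noteq> gdist V E x v + gdist V E y u)}"

definition Theta_star :: "'a set \<Rightarrow> 'a set set \<Rightarrow> ('a set \<times> 'a set) set" where
  "Theta_star V E = (Theta V E)\<^sup>+"

text \<open>Vertices of the full subdivision: original vertices and subdivision vertices (one per edge).\<close>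
datatype 'a svert = Orig 'a | Sub "'a set"

definition subdiv_V :: "'a set \<Rightarrow> 'a set set \<Rightarrow> 'a svert set" where
  "subdiv_V V E = Orig ` V \<union> Sub ` E"

definition subdiv_E :: "'a set set \<Rightarrow> 'a svert set set" where
  "subdiv_E E = {{Orig x, Sub e} | x e. e \<in> E \<and> x \<in> e}"

end

theory Submission
  imports Defs
begin


lemma walk_Cons:
  "walk V E (x # ys) \<longleftrightarrow> x \<in> V \<and> (ys = [] \<or> ({x, hd ys} \<in> E \<and> walk V E ys))"
proof
  assume w: "walk V E (x # ys)"
  have "x \<in> V" using w by (auto simp: walk_def)
  moreover have "ys \<noteq> [] \<Longrightarrow> {x, hd ys} \<in> E \<and> walk V E ys"
  proof -
    assume ne: "ys \<noteq> []"
    have "{(x#ys) ! 0, (x#ys) ! Suc 0} \<in> E" using w ne by (auto simp: walk_def)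
    hence "{x, hd ys} \<in> E" using ne by (simp add: hd_conv_nth)
    moreover have "walk V E ys" unfolding walk_def
    proof (intro conjI allI impI)
      fix i assume "Suc i < length ys"
      hence "{(x#ys) ! Suc i, (x#ys) ! Suc (Suc i)} \<in> E" using w unfolding walk_def by auto
      thus "{ys ! i, ys ! Suc i} \<in> E" by simp
    qed (use w ne in \<open>auto simp: walk_def\<close>)
    ultimately show ?thesis by simp
  qed
  ultimately show "x \<in> V \<and> (ys = [] \<or> ({x, hd ys} \<in> E \<and> walk V E ys))" by blast
next
  assume h: "x \<in> V \<and> (ys = [] \<or> ({x, hd ys} \<in> E \<and> walk V E ys))"
  show "walk V E (x # ys)"
  proof (cases "ys = []")
    case True thus ?thesis using h by (auto simp: walk_def)
  next
    case False
    with h have e: "{x, hd ys} \<in> E" and w: "walk V E ys" by auto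
    show ?thesis unfolding walk_def
    proof (intro conjI allI impI)
      fix i assume i: "Suc i < length (x # ys)"
      show "{(x # ys) ! i, (x # ys) ! Suc i} \<in> E"
      proof (cases i)
        case 0 thus ?thesis using e False by (simp add: hd_conv_nth)
      next
        case (Suc j) thus ?thesis using w i by (auto simp: walk_def)
      qed
    qed (use h w in \<open>auto simp: walk_def\<close>)
  qed
qed

lemma graph_edge: "graph V E \<Longrightarrow> {x, y} \<in> E \<Longrightarrow> x \<in> V \<and> y \<in> V \<and> x \<noteq> y"
  unfolding graph_def by (smt (verit) doubleton_eq_iff insert_absorb2 insert_iff)

lemma walk_bound:
  assumes lip: "\<And>x y z. {x,y}\<in>E \<Longrightarrow> z\<in>V \<Longrightarrow> f x z \<le> Suc (f y z)"
    and refl: "\<And>x. x\<in>V \<Longrightarrow> f x x = 0"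
  shows "walk V E xs \<Longrightarrow> last xs = z \<Longrightarrow> f (hd xs) z \<le> length xs - 1"
proof (induction xs)
  case Nil thus ?case by (simp add: walk_def)
next
  case (Cons x ys)
  show ?case
  proof (cases "ys = []")
    case True thus ?thesis using Cons.prems refl by (auto simp: walk_def)
  next
    case False
    hence e: "{x, hd ys} \<in> E" and w: "walk V E ys" using Cons.prems walk_Cons by metis+
    have "z \<in> V" using w Cons.prems False by (auto simp: walk_def)
    have "f (hd ys) z \<le> length ys - 1" using Cons.IH w Cons.prems False by simp
    moreover have "f x z \<le> Suc (f (hd ys) z)" using lip e \<open>z\<in>V\<close> by blast
    ultimately show ?thesis using False by (cases ys) auto
  qed
qed

lemma gdist_char:
  fixes f :: "'v \<Rightarrow> 'v \<Rightarrow> nat"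
  assumes gr: "graph V E"
    and refl: "\<And>x. x\<in>V \<Longrightarrow> f x x = 0"
    and lip: "\<And>x y z. {x,y}\<in>E \<Longrightarrow> z\<in>V \<Longrightarrow> f x z \<le> Suc (f y z)"
    and desc: "\<And>x z. x\<in>V \<Longrightarrow> z\<in>V \<Longrightarrow> x\<noteq>z \<Longrightarrow> \<exists>y. {x,y}\<in>E \<and> f x z = Suc (f y z)"
    and xV: "x\<in>V" and zV: "z\<in>V"
  shows "gdist V E x z = f x z"
proof -
  have ex: "\<forall>x\<in>V. f x z = n \<longrightarrow> (\<exists>xs. walk V E xs \<and> hd xs = x \<and> last xs = z \<and> length xs = Suc n)" for n
  proof (induction n)
    case 0
    show ?case
    proof (intro ballI impI)
      fix x assume "x \<in> V" "f x z = 0"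
      hence "x = z" using desc zV by fastforce
      thus "\<exists>xs. walk V E xs \<and> hd xs = x \<and> last xs = z \<and> length xs = Suc 0"
        using zV by (intro exI[of _ "[z]"]) (auto simp: walk_def)
    qed
  next
    case (Suc n)
    show ?case
    proof (intro ballI impI)
      fix x assume x: "x \<in> V" "f x z = Suc n"
      hence "x \<noteq> z" using refl zV by auto
      then obtain y where y: "{x,y}\<in>E" "f x z = Suc (f y z)" using desc x zV by blast
      have "y \<in> V" using graph_edge[OF gr y(1)] by simp
      then obtain ys where ys: "walk V E ys" "hd ys = y" "last ys = z" "length ys = Suc n"
        using Suc.IH y x by auto
      have "ys \<noteq> []" using ys by auto
      hence "walk V E (x # ys)" using ys y x walk_Cons by metis
      thus "\<exists>xs. walk V E xs \<and> hd xs = x \<and> last xs = z \<and> length xs = Suc (Suc n)"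
        using ys \<open>ys \<noteq> []\<close> by (intro exI[of _ "x # ys"]) auto
    qed
  qed
  obtain xs where xs: "walk V E xs" "hd xs = x" "last xs = z" "length xs = Suc (f x z)"
    using ex xV by blast
  have le1: "gdist V E x z \<le> f x z" unfolding gdist_def
    by (rule Least_le) (use xs in blast)
  have "\<exists>xs. walk V E xs \<and> hd xs = x \<and> last xs = z \<and> length xs = Suc (gdist V E x z)"
    unfolding gdist_def by (rule LeastI) (use xs in blast)
  then obtain ys where ys: "walk V E ys" "hd ys = x" "last ys = z" "length ys = Suc (gdist V E x z)"
    by blast
  have "f (hd ys) z \<le> length ys - 1"
    by (rule walk_bound[where f=f and E=E and V=V]) (use lip refl ys in auto)
  thus ?thesis using le1 ys(4) ys(2) by simp
qed




context
  fixes V :: "'a set" and E :: "'a set set"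
  assumes gr: "graph V E" and conn: "connected_graph V E"
begin

lemma shortest:
  assumes "x \<in> V" "z \<in> V"
  shows "\<exists>xs. walk V E xs \<and> hd xs = x \<and> last xs = z \<and> length xs = Suc (gdist V E x z)"
proof -
  obtain xs where xs: "walk V E xs" "hd xs = x" "last xs = z"
    using conn assms unfolding connected_graph_def by blast
  hence "length xs = Suc (length xs - 1)" by (cases xs) (auto simp: walk_def)
  with xs have "\<exists>n xs. walk V E xs \<and> hd xs = x \<and> last xs = z \<and> length xs = Suc n" by blast
  then show ?thesis unfolding gdist_def by (rule LeastI_ex)
qed

lemma D_le: "walk V E xs \<Longrightarrow> hd xs = x \<Longrightarrow> last xs = z \<Longrightarrow> gdist V E x z \<le> length xs - 1"
proof -
  assume a: "walk V E xs" "hd xs = x" "last xs = z"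
  hence "length xs = Suc (length xs - 1)" by (cases xs) (auto simp: walk_def)
  with a show ?thesis unfolding gdist_def by (intro Least_le) blast
qed

lemma D_refl: "x \<in> V \<Longrightarrow> gdist V E x x = 0"
  using D_le[of "[x]" x x] by (simp add: walk_def)

lemma D_zero: "x \<in> V \<Longrightarrow> z \<in> V \<Longrightarrow> gdist V E x z = 0 \<Longrightarrow> x = z"
proof -
  assume a: "x \<in> V" "z \<in> V" "gdist V E x z = 0"
  then obtain xs where "walk V E xs" "hd xs = x" "last xs = z" "length xs = Suc 0" using shortest by force
  thus ?thesis by (cases xs) auto
qed

lemma D_lip: assumes "{x,y} \<in> E" "z \<in> V" shows "gdist V E x z \<le> Suc (gdist V E y z)"
proof -
  have xy: "x \<in> V" "y \<in> V" using graph_edge[OF gr assms(1)] by auto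
  obtain ys where ys: "walk V E ys" "hd ys = y" "last ys = z" "length ys = Suc (gdist V E y z)"
    using shortest xy assms by blast
  have ne: "ys \<noteq> []" using ys by auto
  have "walk V E (x # ys)" using walk_Cons ys ne xy assms by metis
  from D_le[OF this] ys ne show ?thesis by simp
qed

lemma D_desc: assumes "x \<in> V" "z \<in> V" "x \<noteq> z"
  shows "\<exists>y. {x,y} \<in> E \<and> gdist V E x z = Suc (gdist V E y z)"
proof -
  obtain xs where xs: "walk V E xs" "hd xs = x" "last xs = z" "length xs = Suc (gdist V E x z)"
    using shortest assms by blast
  then obtain ys where ys: "xs = x # ys" by (cases xs) auto
  have ne: "ys \<noteq> []" using ys xs assms by auto
  have e: "{x, hd ys} \<in> E" and w: "walk V E ys" using xs(1) ys ne walk_Cons by metis+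
  have "gdist V E (hd ys) z \<le> length ys - 1" using D_le[OF w] xs ys ne by simp
  moreover have "gdist V E x z \<le> Suc (gdist V E (hd ys) z)" using D_lip[OF e assms(2)] .
  ultimately show ?thesis using e xs(4) ys ne by (intro exI[of _ "hd ys"]) (cases ys, auto)
qed

lemma edge_split: assumes "e \<in> E" "a \<in> e" shows "\<exists>a'. a' \<noteq> a \<and> e = {a, a'} \<and> a \<in> V \<and> a' \<in> V"
proof -
  obtain p q where pq: "p \<noteq> q" "p \<in> V" "q \<in> V" "e = {p, q}" using gr assms(1) unfolding graph_def by blast
  show ?thesis
  proof (cases "a = p")
    case True thus ?thesis using pq by (intro exI[of _ q]) auto
  next
    case False hence "a = q" using pq assms(2) by auto
    thus ?thesis using pq by (intro exI[of _ p]) auto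
  qed
qed

lemma edge_fin: "e \<in> E \<Longrightarrow> finite e \<and> e \<noteq> {} \<and> e \<subseteq> V"
proof -
  assume "e \<in> E"
  then obtain p q where pq: "p \<in> V" "q \<in> V" "e = {p, q}" using gr unfolding graph_def by blast
  thus ?thesis by simp
qed

lemma D_lipE: assumes "e \<in> E" "a \<in> e" "p \<in> e" "z \<in> V"
  shows "gdist V E a z \<le> Suc (gdist V E p z)"
proof (cases "a = p")
  case False
  obtain a' where "a' \<noteq> a" "e = {a,a'}" using edge_split assms by blast
  hence "e = {a, p}" using assms False by auto
  thus ?thesis using D_lip assms by auto
qed simp

end




definition md :: "('a \<Rightarrow> 'a \<Rightarrow> nat) \<Rightarrow> 'a \<Rightarrow> 'a set \<Rightarrow> nat" where
  "md D a f = Min (D a ` f)"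
definition dm :: "('a \<Rightarrow> 'a \<Rightarrow> nat) \<Rightarrow> 'a set \<Rightarrow> 'a \<Rightarrow> nat" where
  "dm D e b = Min ((\<lambda>p. D p b) ` e)"
definition mm :: "('a \<Rightarrow> 'a \<Rightarrow> nat) \<Rightarrow> 'a set \<Rightarrow> 'a set \<Rightarrow> nat" where
  "mm D e f = Min ((\<lambda>p. md D p f) ` e)"

fun fS :: "('a \<Rightarrow> 'a \<Rightarrow> nat) \<Rightarrow> 'a svert \<Rightarrow> 'a svert \<Rightarrow> nat" where
  "fS D (Orig a) (Orig b) = 2 * D a b"
| "fS D (Orig a) (Sub f) = 1 + 2 * md D a f"
| "fS D (Sub e) (Orig b) = 1 + 2 * dm D e b"
| "fS D (Sub e) (Sub f) = (if e = f then 0 else 2 + 2 * mm D e f)"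

lemma Min_img_le: "finite A \<Longrightarrow> x \<in> A \<Longrightarrow> Min (g ` A) \<le> g x"
  by (simp add: Min_le)
lemma Min_img_ex: "finite A \<Longrightarrow> A \<noteq> {} \<Longrightarrow> \<exists>x\<in>A. Min (g ` A) = g x"
proof -
  assume "finite A" "A \<noteq> {}"
  hence "Min (g ` A) \<in> g ` A" by (intro Min_in) auto
  thus ?thesis by blast
qed

lemma md_le: "finite f \<Longrightarrow> q \<in> f \<Longrightarrow> md D a f \<le> D a q"
  unfolding md_def by (rule Min_img_le)
lemma md_ex: "finite f \<Longrightarrow> f \<noteq> {} \<Longrightarrow> \<exists>q\<in>f. md D a f = D a q"
  unfolding md_def by (rule Min_img_ex)
lemma dm_le: "finite e \<Longrightarrow> p \<in> e \<Longrightarrow> dm D e b \<le> D p b"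
  unfolding dm_def by (rule Min_img_le)
lemma dm_ex: "finite e \<Longrightarrow> e \<noteq> {} \<Longrightarrow> \<exists>p\<in>e. dm D e b = D p b"
  unfolding dm_def by (rule Min_img_ex)
lemma mm_le: "finite e \<Longrightarrow> p \<in> e \<Longrightarrow> mm D e f \<le> md D p f"
  unfolding mm_def by (rule Min_img_le)
lemma mm_ex: "finite e \<Longrightarrow> e \<noteq> {} \<Longrightarrow> \<exists>p\<in>e. mm D e f = md D p f"
  unfolding mm_def by (rule Min_img_ex)

lemma md2: "md D a {p, q} = min (D a p) (D a q)" by (simp add: md_def)
lemma dm2: "dm D {p, q} b = min (D p b) (D q b)" by (simp add: dm_def)
lemma mm2: "mm D {p, q} f = min (md D p f) (md D q f)" by (simp add: mm_def)

lemma subdiv_graph: assumes "graph V E" shows "graph (subdiv_V V E) (subdiv_E E)"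
  unfolding graph_def
proof
  fix X assume "X \<in> subdiv_E E"
  then obtain a e where ae: "X = {Orig a, Sub e}" "e \<in> E" "a \<in> e" unfolding subdiv_E_def by blast
  obtain p q where "e = {p, q}" "p \<in> V" "q \<in> V" using assms ae(2) unfolding graph_def by blast
  hence "a \<in> V" using ae by auto
  hence "Orig a \<noteq> Sub e \<and> Orig a \<in> subdiv_V V E \<and> Sub e \<in> subdiv_V V E \<and> X = {Orig a, Sub e}"
    unfolding subdiv_V_def using ae by simp
  thus "\<exists>x y. x \<noteq> y \<and> x \<in> subdiv_V V E \<and> y \<in> subdiv_V V E \<and> X = {x, y}" by blast
qed

lemma subdiv_edge: "X \<in> subdiv_E E \<Longrightarrow> \<exists>a e. X = {Orig a, Sub e} \<and> e \<in> E \<and> a \<in> e"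
  unfolding subdiv_E_def by blast

context
  fixes V :: "'a set" and E :: "'a set set"
  assumes gr: "graph V E" and conn: "connected_graph V E"
begin

abbreviation "D \<equiv> gdist V E"

lemmas fin = edge_fin[OF gr conn]
lemmas lipE = D_lipE[OF gr conn]

lemma md_le': "finite f \<Longrightarrow> q \<in> f \<Longrightarrow> md D a f \<le> D a q" by (rule md_le)
lemma md_ex': "finite f \<Longrightarrow> f \<noteq> {} \<Longrightarrow> \<exists>q\<in>f. md D a f = D a q" by (rule md_ex)
lemma dm_le': "finite e \<Longrightarrow> p \<in> e \<Longrightarrow> dm D e b \<le> D p b" by (rule dm_le)
lemma dm_ex': "finite e \<Longrightarrow> e \<noteq> {} \<Longrightarrow> \<exists>p\<in>e. dm D e b = D p b" by (rule dm_ex)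
lemma mm_le': "finite e \<Longrightarrow> p \<in> e \<Longrightarrow> mm D e f \<le> md D p f" by (rule mm_le)
lemma mm_ex': "finite e \<Longrightarrow> e \<noteq> {} \<Longrightarrow> \<exists>p\<in>e. mm D e f = md D p f" by (rule mm_ex)
lemma lipE': "e \<in> E \<Longrightarrow> a \<in> e \<Longrightarrow> p \<in> e \<Longrightarrow> z \<in> V \<Longrightarrow> D a z \<le> Suc (D p z)" by (rule lipE)

lemma S_lip:
  assumes "{v, w} \<in> subdiv_E E" "z \<in> subdiv_V V E"
  shows "fS D v z \<le> Suc (fS D w z)"
proof -
  obtain a e where ae: "{v,w} = {Orig a, Sub e}" "e \<in> E" "a \<in> e"
    using subdiv_edge[OF assms(1)] by blast
  have fe: "finite e" "e \<noteq> {}" "e \<subseteq> V" using fin ae(2) by auto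
  have aV: "a \<in> V" using fe ae by auto
  have vw: "(v = Orig a \<and> w = Sub e) \<or> (v = Sub e \<and> w = Orig a)"
    using ae(1) by (auto simp: doubleton_eq_iff)
  consider b where "z = Orig b" "b \<in> V" | f where "z = Sub f" "f \<in> E"
    using assms(2) unfolding subdiv_V_def by blast
  then show ?thesis
  proof cases
    case 1
    from vw show ?thesis
    proof
      assume h: "v = Orig a \<and> w = Sub e"
      obtain p where p: "p \<in> e" "dm D e b = D p b" using dm_ex' fe by blast
      have "D a b \<le> Suc (D p b)" using lipE' ae p 1 by blast
      thus ?thesis using h 1 p by simp
    next
      assume h: "v = Sub e \<and> w = Orig a"
      have "dm D e b \<le> D a b" using dm_le' fe ae by blast
      thus ?thesis using h 1 by simp
    qed
  next
    case 2
    have ff: "finite f" "f \<noteq> {}" "f \<subseteq> V" using fin 2 by auto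
    from vw show ?thesis
    proof
      assume h: "v = Orig a \<and> w = Sub e"
      show ?thesis
      proof (cases "e = f")
        case True
        have "md D a f \<le> D a a" using md_le' ff ae True by blast
        thus ?thesis using h 2 True D_refl[OF gr conn aV] by simp
      next
        case False
        obtain p where p: "p \<in> e" "mm D e f = md D p f" using mm_ex' fe by blast
        obtain q where q: "q \<in> f" "md D p f = D p q" using md_ex' ff by blast
        have "md D a f \<le> D a q" using md_le' ff q by blast
        moreover have "D a q \<le> Suc (D p q)" using lipE' ae p q ff by blast
        ultimately show ?thesis using h 2 False p q by simp
      qed
    next
      assume h: "v = Sub e \<and> w = Orig a"
      have "mm D e f \<le> md D a f" using mm_le' fe ae by blast
      thus ?thesis using h 2 by simp
    qed
  qed
qed

lemma S_desc:
  assumes "v \<in> subdiv_V V E" "z \<in> subdiv_V V E" "v \<noteq> z"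
  shows "\<exists>w. {v, w} \<in> subdiv_E E \<and> fS D v z = Suc (fS D w z)"
proof -
  have edge: "{Orig a, Sub e} \<in> subdiv_E E" if "e \<in> E" "a \<in> e" for a e
    using that unfolding subdiv_E_def by blast
  have edge': "{Sub e, Orig a} \<in> subdiv_E E" if "e \<in> E" "a \<in> e" for a e
    using edge[OF that] by (simp add: insert_commute)
  consider a where "v = Orig a" "a \<in> V" | e where "v = Sub e" "e \<in> E"
    using assms(1) unfolding subdiv_V_def by blast
  then show ?thesis
  proof cases
    case 1
    note v = 1
    consider b where "z = Orig b" "b \<in> V" | f where "z = Sub f" "f \<in> E"
      using assms(2) unfolding subdiv_V_def by blast
    then show ?thesis
    proof cases
      case 1
      have "a \<noteq> b" using 1 v assms by auto
      then obtain c where c: "{a,c} \<in> E" "D a b = Suc (D c b)" using D_desc[OF gr conn] v 1 by blast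
      have "dm D {a,c} b = D c b" using c by (simp add: dm2)
      thus ?thesis using c v 1 edge[of "{a,c}" a] by (intro exI[of _ "Sub {a,c}"]) auto
    next
      case 2
      have ff: "finite f" "f \<noteq> {}" "f \<subseteq> V" using fin 2 by auto
      show ?thesis
      proof (cases "a \<in> f")
        case True
        have "md D a f \<le> D a a" using md_le' ff True by blast
        hence "md D a f = 0" using D_refl[OF gr conn] v by simp
        thus ?thesis using v 2 True edge by (intro exI[of _ "Sub f"]) auto
      next
        case False
        obtain q where q: "q \<in> f" "md D a f = D a q" using md_ex' ff by blast
        have "a \<noteq> q" using q False by auto
        then obtain c where c: "{a,c} \<in> E" "D a q = Suc (D c q)"
          using D_desc[OF gr conn] v q ff by blast
        have ne: "{a,c} \<noteq> f" using False by auto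
        have "md D c f \<le> D c q" using md_le' ff q by blast
        moreover have "md D a f \<le> Suc (md D c f)"
        proof -
          obtain q' where q': "q' \<in> f" "md D c f = D c q'" using md_ex' ff by blast
          have "md D a f \<le> D a q'" using md_le' ff q' by blast
          moreover have "D a q' \<le> Suc (D c q')" using D_lip[OF gr conn c(1)] q' ff by blast
          ultimately show ?thesis using q' by simp
        qed
        ultimately have "mm D {a,c} f = D c q" using q c by (simp add: mm2)
        thus ?thesis using v 2 ne c q edge[of "{a,c}" a]
          by (intro exI[of _ "Sub {a,c}"]) auto
      qed
    qed
  next
    case 2
    note v = 2
    have fe: "finite e" "e \<noteq> {}" "e \<subseteq> V" using fin v by auto
    consider b where "z = Orig b" "b \<in> V" | f where "z = Sub f" "f \<in> E"
      using assms(2) unfolding subdiv_V_def by blast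
    then show ?thesis
    proof cases
      case 1
      obtain p where p: "p \<in> e" "dm D e b = D p b" using dm_ex' fe by blast
      thus ?thesis using v 1 edge'[of e p] by (intro exI[of _ "Orig p"]) auto
    next
      case 2
      have ne: "e \<noteq> f" using v 2 assms by auto
      obtain p where p: "p \<in> e" "mm D e f = md D p f" using mm_ex' fe by blast
      thus ?thesis using v 2 ne edge'[of e p] by (intro exI[of _ "Orig p"]) auto
    qed
  qed
qed

lemma S_dist:
  assumes "v \<in> subdiv_V V E" "z \<in> subdiv_V V E"
  shows "gdist (subdiv_V V E) (subdiv_E E) v z = fS D v z"
proof (rule gdist_char[OF subdiv_graph[OF gr]])
  fix x assume "x \<in> subdiv_V V E"
  thus "fS D x x = 0" unfolding subdiv_V_def using D_refl[OF gr conn] by auto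
next
  fix x y z assume "{x, y} \<in> subdiv_E E" "z \<in> subdiv_V V E"
  thus "fS D x z \<le> Suc (fS D y z)" by (rule S_lip)
next
  fix x z assume "x \<in> subdiv_V V E" "z \<in> subdiv_V V E" "x \<noteq> z"
  thus "\<exists>y. {x, y} \<in> subdiv_E E \<and> fS D x z = Suc (fS D y z)" by (rule S_desc)
qed (use assms in auto)

end




definition phi :: "'a svert set \<Rightarrow> 'a set" where
  "phi X = (THE e. Sub e \<in> X)"

lemma phi_eq: "phi {Orig a, Sub e} = e"
  unfolding phi_def by (rule the_equality) auto

lemma key_arith:
  fixes p q r s :: nat
  assumes "p + s = q + r" "p \<le> Suc r" "r \<le> Suc p" "q \<le> Suc s" "s \<le> Suc q"
  shows "2 * p + (2 + 2 * min (min p q) (min r s)) = (1 + 2 * min p q) + (1 + 2 * min p r)"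
  using assms by (simp add: min_def)

lemma ThetaD: "(A, B) \<in> Theta V E \<Longrightarrow> \<exists>x y u v. A = {x,y} \<and> B = {u,v} \<and>
   gdist V E x u + gdist V E y v \<noteq> gdist V E x v + gdist V E y u"
  unfolding Theta_def by simp

context
  fixes V :: "'a set" and E :: "'a set set"
  assumes gr: "graph V E" and conn: "connected_graph V E"
begin

lemma theta_refl:
  assumes "e \<in> E" shows "(e, e) \<in> Theta V E"
proof -
  obtain p q where pq: "p \<noteq> q" "p \<in> V" "q \<in> V" "e = {p, q}" using gr assms unfolding graph_def by blast
  have "gdist V E p q \<noteq> 0" using D_zero[OF gr conn] pq by blast
  hence "gdist V E p p + gdist V E q q \<noteq> gdist V E p q + gdist V E q p"
    using D_refl[OF gr conn] pq by simp
  thus ?thesis unfolding Theta_def using assms pq by blast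
qed

lemma theta_step:
  assumes th: "({Orig a, Sub e}, {Orig b, Sub f}) \<in> Theta (subdiv_V V E) (subdiv_E E)"
    and ae: "e \<in> E" "a \<in> e" and bf: "f \<in> E" "b \<in> f"
  shows "(e, f) \<in> Theta V E"
proof (cases "e = f")
  case True thus ?thesis using theta_refl ae by simp
next
  case ne: False
  show ?thesis
  proof (rule ccontr)
    assume nt: "(e, f) \<notin> Theta V E"
    obtain a' where a': "a' \<noteq> a" "e = {a, a'}" "a \<in> V" "a' \<in> V" using edge_split[OF gr conn ae] by blast
    obtain b' where b': "b' \<noteq> b" "f = {b, b'}" "b \<in> V" "b' \<in> V" using edge_split[OF gr conn bf] by blast
    let ?D = "gdist V E"
    have eq: "?D a b + ?D a' b' = ?D a b' + ?D a' b"
      using nt ae bf a' b' unfolding Theta_def by blast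
    have l1: "?D a b \<le> Suc (?D a' b)" "?D a' b \<le> Suc (?D a b)"
      "?D a b' \<le> Suc (?D a' b')" "?D a' b' \<le> Suc (?D a b')"
      using D_lipE[OF gr conn ae(1)] a' b' ae by auto
    let ?F = "fS ?D"
    have key: "?F (Orig a) (Orig b) + ?F (Sub e) (Sub f) = ?F (Orig a) (Sub f) + ?F (Sub e) (Orig b)"
    proof -
      have m1: "mm ?D e f = min (min (?D a b) (?D a b')) (min (?D a' b) (?D a' b'))"
        unfolding a'(2) b'(2) mm2 md2 ..
      have m2: "md ?D a f = min (?D a b) (?D a b')" unfolding b'(2) md2 ..
      have m3: "dm ?D e b = min (?D a b) (?D a' b)" unfolding a'(2) dm2 ..
      show ?thesis unfolding fS.simps m1 m2 m3 if_not_P[OF ne] by (rule key_arith[OF eq l1(1,2,3,4)])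
    qed
    have VS: "Orig a \<in> subdiv_V V E" "Orig b \<in> subdiv_V V E" "Sub e \<in> subdiv_V V E" "Sub f \<in> subdiv_V V E"
      unfolding subdiv_V_def using a' b' ae bf by auto
    obtain x y u v where xyuv: "{Orig a, Sub e} = {x, y}" "{Orig b, Sub f} = {u, v}"
      "gdist (subdiv_V V E) (subdiv_E E) x u + gdist (subdiv_V V E) (subdiv_E E) y v \<noteq>
       gdist (subdiv_V V E) (subdiv_E E) x v + gdist (subdiv_V V E) (subdiv_E E) y u"
      using ThetaD[OF th] by (elim exE conjE) (rule that; assumption)
    have xy: "(x = Orig a \<and> y = Sub e) \<or> (x = Sub e \<and> y = Orig a)" using xyuv(1) by (auto simp: doubleton_eq_iff)
    have uv: "(u = Orig b \<and> v = Sub f) \<or> (u = Sub f \<and> v = Orig b)" using xyuv(2) by (auto simp: doubleton_eq_iff)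
    have "x \<in> subdiv_V V E" "y \<in> subdiv_V V E" "u \<in> subdiv_V V E" "v \<in> subdiv_V V E"
      using xy uv VS by auto
    hence "?F x u + ?F y v \<noteq> ?F x v + ?F y u" using xyuv(3) S_dist[OF gr conn] by simp
    thus False using xy uv key by auto
  qed
qed

lemma theta_trancl:
  assumes "(X, Y) \<in> (Theta (subdiv_V V E) (subdiv_E E))\<^sup>+"
  shows "(phi X, phi Y) \<in> (Theta V E)\<^sup>+"
  using assms
proof (induction rule: trancl_induct)
  case (base Y)
  have "X \<in> subdiv_E E" "Y \<in> subdiv_E E" using base unfolding Theta_def by auto
  then obtain a e b f where "X = {Orig a, Sub e}" "e \<in> E" "a \<in> e" "Y = {Orig b, Sub f}" "f \<in> E" "b \<in> f"
    using subdiv_edge by metis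
  moreover from this have "(e, f) \<in> Theta V E" using theta_step base by blast
  ultimately show ?case by (simp only: phi_eq r_into_trancl')
next
  case (step Y Z)
  have "Y \<in> subdiv_E E" "Z \<in> subdiv_E E" using step unfolding Theta_def by auto
  then obtain a e b f where "Y = {Orig a, Sub e}" "e \<in> E" "a \<in> e" "Z = {Orig b, Sub f}" "f \<in> E" "b \<in> f"
    using subdiv_edge by metis
  hence "(phi Y, phi Z) \<in> Theta V E" using theta_step[of a e b f] step by (simp only: phi_eq)
  thus ?case using step by (meson trancl_into_trancl)
qed

end

theorem corollary3p2:
  fixes V :: "'a set" and E :: "'a set set" and x y u v :: 'a
  assumes "graph V E" and "finite V" and "connected_graph V E"
    and "{x, y} \<in> E" and "{u, v} \<in> E"
    and "({Orig x, Sub {x, y}}, {Orig u, Sub {u, v}}) \<in> Theta_star (subdiv_V V E) (subdiv_E E)"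
  shows "({x, y}, {u, v}) \<in> Theta_star V E"
  using theta_trancl[OF assms(1,3)] assms(6) phi_eq unfolding Theta_star_def by metis


end
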